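(* Assume (H1): $\bar L<\infty$ and $\sup_{0<t<T}\bar b(t)<\infty$ for every $T>0$. Then for every $T>0$ there is a constant $C$ such that for all $0<s<t\le T$, $|M_1(t)-M_1(s)|\le C\big((t-s)+F(t)-F(s)\big)$.
   Context: Crump–Mode–Jagers (CMJ) setting. $L$ is an $\mathbb N$-valued random variable with $\bar L=\mathbb E[L]$; $\eta>0$ a random lifetime with $F(t)=\mathbb P(\eta\le t)$, $F^c=1-F$; $b=(b(t))_{t\ge0}$ a measurable $\mathbb R_+$-valued random process with $\bar b(t)=\mathbb E[b(t)]$. $Z$ is the CMJ process started from one ancestor (each individual independently lives for a copy of $\eta$ and, at the jump times in its age of a Cox process with intensity given by its copy of $b$, gives birth to an independent copy of $L$ children, each starting an independent copy of the process), and $M_1(t)=\mathbb E[Z(t)]$, which is the (locally bounded) solution of $M_1(t)=F^c(t)+\int_0^t\bar L\,M_1(t-s)\bar b(s)\,ds$. *)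

theory Defs
  imports "HOL-Probability.Probability"
begin

definition cmj_Lbar :: "'a measure \<Rightarrow> ('a \<Rightarrow> nat) \<Rightarrow> real" where
  "cmj_Lbar M L = (\<integral>\<omega>. real (L \<omega>) \<partial>M)"

definition cmj_F :: "'a measure \<Rightarrow> ('a \<Rightarrow> real) \<Rightarrow> real \<Rightarrow> real" where
  "cmj_F M eta t = measure M {\<omega> \<in> space M. eta \<omega> \<le> t}"

definition cmj_bbar :: "'a measure \<Rightarrow> (real \<Rightarrow> 'a \<Rightarrow> real) \<Rightarrow> real \<Rightarrow> real" where
  "cmj_bbar M b t = enn2real (\<integral>\<^sup>+\<omega>. ennreal (b t \<omega>) \<partial>M)"

definition cmj_renewal_solution ::
  "real \<Rightarrow> (real \<Rightarrow> real) \<Rightarrow> (real \<Rightarrow> real) \<Rightarrow> (real \<Rightarrow> real) \<Rightarrow> bool" where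
  "cmj_renewal_solution Lbar F bbar M1 \<longleftrightarrow>
     M1 \<in> borel_measurable borel \<and>
     (\<forall>T\<ge>0. \<exists>B. \<forall>t\<in>{0..T}. \<bar>M1 t\<bar> \<le> B) \<and>
     (\<forall>t\<ge>0. M1 t = (1 - F t) +
         (LINT s:{0..t}|lborel. Lbar * M1 (t - s) * bbar s))"

end

theory Submission
  imports Defs
begin


lemma intg_bdd:
  fixes f :: "real \<Rightarrow> real"
  assumes "f \<in> borel_measurable borel" "\<And>u. u \<in> {a..b} \<Longrightarrow> \<bar>f u\<bar> \<le> B"
  shows "f integrable_on {a..b}"
proof -
  have "set_integrable lborel {a..b} f"
    unfolding set_integrable_def
    by (rule integrableI_bounded_set[where A="{a..b}" and B=B]) (use assms in \<open>auto simp: indicator_def emeasure_lborel_Icc_eq\<close>)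
  thus ?thesis by (rule set_borel_integral_eq_integral(1))
qed

lemma shift_int:
  fixes F :: "real \<Rightarrow> real"
  assumes "F integrable_on {c..x+c}" "0 \<le> x"
  shows "((\<lambda>u. F (x - u + c)) has_integral integral {c..x+c} F) {0..x}"
proof -
  have "((\<lambda>w. F ((-1) *\<^sub>R w + (x+c))) has_integral (1 / (\<bar>-1\<bar> ^ DIM(real))) *\<^sub>R integral {c..x+c} F)
     ((\<lambda>w. (1 / (-1)) *\<^sub>R w + -((1 / (-1)) *\<^sub>R (x+c))) ` cbox c (x+c))"
    by (rule has_integral_affinity) (use assms in auto)
  moreover have "((\<lambda>w. (1 / (-1)) *\<^sub>R w + -((1 / (-1)) *\<^sub>R (x+c))) ` cbox c (x+c)) = {0..x}"
  proof -
    have "((\<lambda>w. (1 / (-1)) *\<^sub>R w + -((1 / (-1)) *\<^sub>R (x+c))) ` cbox c (x+c)) = (\<lambda>w. x + c - w) ` {c..x+c}"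
      by (auto simp: image_iff)
    also have "\<dots> = {0..x}"
      by (auto simp: image_iff intro!: bexI[where x="x+c-_"])
    finally show ?thesis .
  qed
  ultimately show ?thesis by (simp add: algebra_simps)
qed

lemma exp_int:
  fixes a x :: real
  assumes "a > 0" "0 \<le> x"
  shows "((\<lambda>u. exp (a*(x-u))) has_integral (exp (a*x) - 1)/a) {0..x}"
proof -
  have "((\<lambda>u. exp (a*(x-u))) has_integral ((\<lambda>u. - exp (a*(x-u))/a) x - (\<lambda>u. - exp (a*(x-u))/a) 0)) {0..x}"
    apply (rule fundamental_theorem_of_calculus)
    using assms apply simp
    unfolding has_real_derivative_iff_has_vector_derivative[symmetric]
    using assms by (auto intro!: derivative_eq_intros simp: field_simps)
  thus ?thesis using assms by (simp add: field_simps)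
qed

lemma core:
  fixes M1 F \<beta> :: "real \<Rightarrow> real" and K Bm Bb T :: real
  assumes M1m: "M1 \<in> borel_measurable borel"
    and \<beta>m: "\<beta> \<in> borel_measurable borel"
    and Fmono: "mono F" and F0: "\<And>x. 0 \<le> F x" and F1: "\<And>x. F x \<le> 1"
    and M1b: "\<And>x. x \<in> {0..T} \<Longrightarrow> \<bar>M1 x\<bar> \<le> Bm"
    and \<beta>0: "\<And>u. 0 \<le> \<beta> u" and \<beta>b: "\<And>u. \<beta> u \<le> Bb"
    and eq: "\<And>t. t \<in> {0..T} \<Longrightarrow> M1 t = 1 - F t + K * integral {0..t} (\<lambda>u. M1 (t - u) * \<beta> u)"
    and T: "T > 0"
  shows "\<exists>C. \<forall>s t. 0 < s \<and> s < t \<and> t \<le> T \<longrightarrow> \<bar>M1 t - M1 s\<bar> \<le> C * ((t - s) + F t - F s)"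
proof -
  have Bb0: "0 \<le> Bb" using \<beta>0[of 0] \<beta>b[of 0] by linarith
  have Bm0: "0 \<le> Bm" using M1b[of 0] T by force
  have Fm: "F \<in> borel_measurable borel" by (rule borel_measurable_mono[OF Fmono])
  note [measurable] = M1m \<beta>m Fm
  define g where "g y = integral {0..y} (\<lambda>u. M1 (y - u) * \<beta> u)" for y
  define A where "A = (Bm + 1) * Bb"
  define a where "a = 2 * Bb * \<bar>K\<bar> + 1"
  have a0: "a > 0" using Bb0 by (simp add: a_def add_nonneg_pos)
  have A0: "A \<ge> 0" using Bb0 Bm0 by (simp add: A_def)
  have intf: "(\<lambda>u. M1 (y - u) * \<beta> u) integrable_on {p..q}" if "0 \<le> p" "q \<le> y" "y \<le> T" for y p q
  proof (rule intg_bdd[where B="Bm*Bb"])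
    show "(\<lambda>u. M1 (y - u) * \<beta> u) \<in> borel_measurable borel" by measurable
    fix u assume u: "u \<in> {p..q}"
    have "\<bar>M1 (y - u)\<bar> \<le> Bm" using u that by (intro M1b) auto
    thus "\<bar>M1 (y - u) * \<beta> u\<bar> \<le> Bm * Bb"
      unfolding abs_mult using \<beta>0[of u] \<beta>b[of u] Bm0 by (simp add: mult_mono)
  qed
  have gb: "\<bar>g y\<bar> \<le> Bm * Bb * T" if "0 \<le> y" "y \<le> T" for y
  proof -
    have "\<bar>g y\<bar> \<le> integral {0..y} (\<lambda>u. Bm * Bb)"
      unfolding g_def
    proof (rule integral_norm_bound_integral[where f="\<lambda>u. M1 (y - u) * \<beta> u", simplified])
      show "(\<lambda>u. M1 (y - u) * \<beta> u) integrable_on {0..y}" using that by (intro intf) auto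
      fix u assume u: "u \<in> {0..y}"
      have "\<bar>M1 (y - u)\<bar> \<le> Bm" using u that by (intro M1b) auto
      thus "\<bar>M1 (y - u) * \<beta> u\<bar> \<le> Bm * Bb"
        unfolding abs_mult using \<beta>0[of u] \<beta>b[of u] Bm0 by (simp add: mult_mono)
    qed auto
    also have "\<dots> = y * (Bm * Bb)" using that by simp
    also have "\<dots> \<le> T * (Bm * Bb)" using that Bm0 Bb0 by (intro mult_right_mono) auto
    finally show ?thesis by (simp add: algebra_simps)
  qed
  define C where "C = 1 + 2 * \<bar>K\<bar> * A * exp (a * T)"
  show ?thesis
  proof (intro exI[of _ C] allI impI)
    fix s t assume st: "0 < s \<and> s < t \<and> t \<le> T"
    define h where "h = t - s"
    define R where "R = T - h"
    have h0: "h > 0" and R0: "R \<ge> s" using st by (auto simp: h_def R_def)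
    define D where "D x = \<bar>g (x + h) - g x\<bar>" for x
    define W where "W = (SUP x\<in>{0..R}. D x * exp (-(a*x)))"
    have bdd: "bdd_above ((\<lambda>x. D x * exp (-(a*x))) ` {0..R})"
    proof (rule bdd_aboveI2)
      fix x assume x: "x \<in> {0..R}"
      have "D x \<le> 2 * (Bm * Bb * T)" unfolding D_def
        using gb[of "x+h"] gb[of x] x h0 by (auto simp: R_def)
      moreover have "exp (-(a*x)) \<le> 1" using a0 x by auto
      moreover have "0 \<le> D x" by (simp add: D_def)
      ultimately show "D x * exp (-(a*x)) \<le> 2 * (Bm * Bb * T)"
        using Bm0 Bb0 T by (metis mult_left_le mult_left_mono order_trans exp_ge_zero mult.commute)
    qed
    have Wup: "D x * exp (-(a*x)) \<le> W" if "x \<in> {0..R}" for x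
      unfolding W_def using bdd that by (rule cSUP_upper2) simp
    have Dle: "D x \<le> W * exp (a*x)" if "x \<in> {0..R}" for x
    proof -
      have "D x = D x * exp (-(a*x)) * exp (a*x)" by (simp add: exp_minus field_simps)
      also have "\<dots> \<le> W * exp (a*x)" using Wup[OF that] by (intro mult_right_mono) auto
      finally show ?thesis .
    qed
    have W0: "0 \<le> W" using Wup[of 0] R0 st by (auto simp: D_def)
    have Fint: "(\<lambda>u. F (x - u + c)) integrable_on {0..x} \<and> integral {0..x} (\<lambda>u. F (x - u + c)) = integral {c..x+c} F"
      if "0 \<le> x" for x c
    proof -
      have "F integrable_on {c..x+c}" by (rule intg_bdd[where B=1]) (use F0 F1 in \<open>auto simp: abs_le_iff intro: order_trans[OF _ zero_le_one]\<close>)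
      from shift_int[OF this that] show ?thesis by blast
    qed
    have Fint_ivl: "F integrable_on {p..q}" for p q
      by (rule intg_bdd[where B=1]) (use F0 F1 in \<open>auto simp: abs_le_iff intro: order_trans[OF _ zero_le_one]\<close>)
    have Fdiff: "(\<lambda>u. F (x - u + h) - F (x - u)) integrable_on {0..x} \<and> integral {0..x} (\<lambda>u. F (x - u + h) - F (x - u)) \<le> h"
      if x: "0 \<le> x" for x
    proof -
      have i1: "(\<lambda>u. F (x - u + h)) integrable_on {0..x}" "integral {0..x} (\<lambda>u. F (x - u + h)) = integral {h..x+h} F"
        using Fint[OF x, of h] by auto
      have i0: "(\<lambda>u. F (x - u)) integrable_on {0..x}" "integral {0..x} (\<lambda>u. F (x - u)) = integral {0..x} F"
        using Fint[OF x, of 0] by auto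
      have c1: "integral {0..h} F + integral {h..x+h} F = integral {0..x+h} F"
        using h0 x by (intro Henstock_Kurzweil_Integration.integral_combine Fint_ivl) auto
      have c2: "integral {0..x} F + integral {x..x+h} F = integral {0..x+h} F"
        using h0 x by (intro Henstock_Kurzweil_Integration.integral_combine Fint_ivl) auto
      have n1: "integral {0..h} F \<ge> 0" using F0 by (intro integral_nonneg Fint_ivl) auto
      have n2: "integral {x..x+h} F \<le> integral {x..x+h} (\<lambda>_. 1)"
        using F1 by (intro integral_le Fint_ivl) auto
      have n3: "integral {x..x+h} (\<lambda>_. 1::real) = h" using h0 by simp
      have "integral {0..x} (\<lambda>u. F (x - u + h) - F (x - u)) = integral {h..x+h} F - integral {0..x} F"
        using i1 i0 by (simp add: integral_diff)
      also have "\<dots> \<le> h" using c1 c2 n1 n2 n3 by linarith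
      finally show ?thesis using i1 i0 by (auto intro: integrable_diff)
    qed
    have key: "D x * exp (-(a*x)) \<le> A * h + W / 2" if x: "x \<in> {0..R}" for x
    proof -
      have xh: "0 \<le> x" "x + h \<le> T" using x by (auto simp: R_def)
      define f1 where "f1 u = M1 (x + h - u) * \<beta> u" for u
      define f0 where "f0 u = M1 (x - u) * \<beta> u" for u
      have if1: "f1 integrable_on {0..x+h}" unfolding f1_def using xh h0 by (intro intf) auto
      have if1': "f1 integrable_on {0..x}" unfolding f1_def using xh h0 by (intro intf) auto
      have if1'': "f1 integrable_on {x..x+h}" unfolding f1_def using xh h0 by (intro intf) auto
      have if0: "f0 integrable_on {0..x}" unfolding f0_def using xh h0 by (intro intf) auto
      have split: "g (x + h) - g x = integral {x..x+h} f1 + integral {0..x} (\<lambda>u. f1 u - f0 u)"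
      proof -
        have "g (x + h) = integral {0..x} f1 + integral {x..x+h} f1"
          unfolding g_def f1_def[symmetric] using xh h0 if1 by (intro Henstock_Kurzweil_Integration.integral_combine[symmetric]) auto
        moreover have "g x = integral {0..x} f0" unfolding g_def f0_def ..
        moreover have "integral {0..x} (\<lambda>u. f1 u - f0 u) = integral {0..x} f1 - integral {0..x} f0"
          using if1' if0 by (rule integral_diff)
        ultimately show ?thesis by simp
      qed
      have I1: "\<bar>integral {x..x+h} f1\<bar> \<le> Bm * Bb * h"
      proof -
        have "\<bar>integral {x..x+h} f1\<bar> \<le> integral {x..x+h} (\<lambda>u. Bm * Bb)"
        proof (rule integral_norm_bound_integral[where f=f1, simplified])
          show "f1 integrable_on {x..x+h}" by (rule if1'')
          fix u assume u: "u \<in> {x..x+h}"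
          have "\<bar>M1 (x + h - u)\<bar> \<le> Bm" using u xh by (intro M1b) auto
          thus "\<bar>f1 u\<bar> \<le> Bm * Bb"
            unfolding abs_mult f1_def using \<beta>0[of u] \<beta>b[of u] Bm0 by (simp add: mult_mono)
        qed auto
        also have "\<dots> = Bm * Bb * h" using h0 by simp
        finally show ?thesis .
      qed
      define maj where "maj u = Bb * (F (x - u + h) - F (x - u)) + Bb * \<bar>K\<bar> * W * exp (a * (x - u))" for u
      have Fd: "(\<lambda>u. F (x - u + h) - F (x - u)) integrable_on {0..x}"
        "integral {0..x} (\<lambda>u. F (x - u + h) - F (x - u)) \<le> h" using Fdiff[OF xh(1)] by auto
      have E: "((\<lambda>u. exp (a*(x-u))) has_integral (exp (a*x) - 1)/a) {0..x}" by (rule exp_int[OF a0 xh(1)])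
      have imaj: "maj integrable_on {0..x}" unfolding maj_def
        using Fd(1) E by (intro integrable_add integrable_on_mult_right) (auto simp: has_integral_integrable)
      have imajv: "integral {0..x} maj = Bb * integral {0..x} (\<lambda>u. F (x - u + h) - F (x - u)) + Bb * \<bar>K\<bar> * W * ((exp (a*x) - 1)/a)"
      proof -
        have Ei: "(\<lambda>u. exp (a*(x-u))) integrable_on {0..x}" and Ev: "integral {0..x} (\<lambda>u. exp (a*(x-u))) = (exp (a*x) - 1)/a"
          using E by (auto simp: has_integral_integrable integral_unique)
        show ?thesis unfolding maj_def using Fd(1) Ei Ev by (subst integral_add) (auto intro!: integrable_on_mult_right)
      qed
      have I2: "\<bar>integral {0..x} (\<lambda>u. f1 u - f0 u)\<bar> \<le> integral {0..x} maj"
      proof (rule integral_norm_bound_integral[where f="\<lambda>u. f1 u - f0 u", simplified])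
        show "(\<lambda>u. f1 u - f0 u) integrable_on {0..x}" using if1' if0 by (rule integrable_diff)
        show "maj integrable_on {0..x}" by (rule imaj)
        fix u assume u: "u \<in> {0..x}"
        define y where "y = x - u"
        have y: "y \<in> {0..R}" using u x by (auto simp: y_def)
        have yT: "0 \<le> y" "y + h \<le> T" using y by (auto simp: R_def)
        have e1: "M1 (y + h) = 1 - F (y + h) + K * g (y + h)" unfolding g_def using yT h0 by (intro eq) auto
        have e0: "M1 y = 1 - F y + K * g y" unfolding g_def using yT h0 T by (intro eq) auto
        have Fy: "F y \<le> F (y + h)" using Fmono h0 by (auto intro: monoD)
        have "\<bar>M1 (y + h) - M1 y\<bar> = \<bar>-(F (y + h) - F y) + K * (g (y + h) - g y)\<bar>"
          using e1 e0 by (simp add: algebra_simps)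
        also have "\<dots> \<le> (F (y + h) - F y) + \<bar>K\<bar> * D y"
          using Fy unfolding D_def by (simp add: abs_mult abs_triangle_ineq[THEN order_trans])
        also have "\<dots> \<le> (F (y + h) - F y) + \<bar>K\<bar> * (W * exp (a*y))"
          using Dle[OF y] by (intro add_left_mono mult_left_mono) auto
        finally have m: "\<bar>M1 (y + h) - M1 y\<bar> \<le> (F (y + h) - F y) + \<bar>K\<bar> * (W * exp (a*y))" .
        have "\<bar>f1 u - f0 u\<bar> = \<bar>M1 (y + h) - M1 y\<bar> * \<beta> u"
        proof -
          have "f1 u - f0 u = (M1 (y + h) - M1 y) * \<beta> u"
            unfolding f1_def f0_def y_def by (simp add: algebra_simps)
          thus ?thesis using \<beta>0[of u] by (simp add: abs_mult)
        qed
        also have "\<dots> \<le> ((F (y + h) - F y) + \<bar>K\<bar> * (W * exp (a*y))) * Bb"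
          using m \<beta>0[of u] \<beta>b[of u] by (intro mult_mono) auto
        also have "\<dots> = maj u" unfolding maj_def y_def by (simp add: algebra_simps)
        finally show "\<bar>f1 u - f0 u\<bar> \<le> maj u" .
      qed
      have "D x \<le> Bm * Bb * h + (Bb * h + Bb * \<bar>K\<bar> * W * ((exp (a*x) - 1)/a))"
      proof -
        have "D x \<le> \<bar>integral {x..x+h} f1\<bar> + \<bar>integral {0..x} (\<lambda>u. f1 u - f0 u)\<bar>"
          unfolding D_def split by (rule abs_triangle_ineq)
        moreover have "Bb * integral {0..x} (\<lambda>u. F (x - u + h) - F (x - u)) \<le> Bb * h"
          using Fd(2) Bb0 by (rule mult_left_mono)
        ultimately show ?thesis using I1 I2 imajv by linarith
      qed
      also have "\<dots> \<le> A * h + Bb * \<bar>K\<bar> * W * (exp (a*x) / a)"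
      proof -
        have "(exp (a*x) - 1)/a \<le> exp (a*x) / a" using a0 by (simp add: divide_right_mono)
        hence "Bb * \<bar>K\<bar> * W * ((exp (a*x) - 1)/a) \<le> Bb * \<bar>K\<bar> * W * (exp (a*x) / a)"
          using Bb0 W0 by (intro mult_left_mono) auto
        thus ?thesis by (simp add: A_def algebra_simps)
      qed
      finally have Dx: "D x \<le> A * h + Bb * \<bar>K\<bar> * W * (exp (a*x) / a)" .
      have "D x * exp (-(a*x)) \<le> (A * h + Bb * \<bar>K\<bar> * W * (exp (a*x) / a)) * exp (-(a*x))"
        using Dx by (intro mult_right_mono) auto
      also have "\<dots> = A * h * exp (-(a*x)) + Bb * \<bar>K\<bar> * W / a"
        using a0 by (simp add: field_simps exp_minus)
      also have "\<dots> \<le> A * h + W / 2"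
      proof -
        have "exp (-(a*x)) \<le> 1" using a0 xh by auto
        hence "A * h * exp (-(a*x)) \<le> A * h" using A0 h0 by (simp add: mult_left_le)
        moreover have "Bb * \<bar>K\<bar> * W / a \<le> W / 2"
        proof -
          have "2 * (Bb * \<bar>K\<bar> * W) \<le> a * W" using W0 by (simp add: a_def algebra_simps)
          thus ?thesis using a0 by (simp add: field_simps)
        qed
        ultimately show ?thesis by linarith
      qed
      finally show ?thesis .
    qed
    have "W \<le> A * h + W / 2"
      unfolding W_def using R0 st by (intro cSUP_least) (auto intro: key[unfolded W_def])
    hence Wb: "W \<le> 2 * A * h" by linarith
    have sR: "s \<in> {0..R}" using R0 st by auto
    have Ds: "D s \<le> 2 * A * h * exp (a * T)"
    proof -
      have "D s \<le> W * exp (a * s)" by (rule Dle[OF sR])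
      also have "\<dots> \<le> 2 * A * h * exp (a * T)"
        using Wb W0 a0 st by (intro mult_mono) auto
      finally show ?thesis .
    qed
    have tt: "t = s + h" by (simp add: h_def)
    have e1: "M1 t = 1 - F t + K * g t" unfolding g_def using st by (intro eq) auto
    have e0: "M1 s = 1 - F s + K * g s" unfolding g_def using st by (intro eq) auto
    have Fst: "F s \<le> F t" using Fmono st by (auto intro: monoD)
    have "\<bar>M1 t - M1 s\<bar> = \<bar>-(F t - F s) + K * (g (s + h) - g s)\<bar>"
      using e1 e0 tt by (simp add: algebra_simps)
    also have "\<dots> \<le> (F t - F s) + \<bar>K\<bar> * D s"
      using Fst unfolding D_def by (simp add: abs_mult abs_triangle_ineq[THEN order_trans])
    also have "\<dots> \<le> (F t - F s) + \<bar>K\<bar> * (2 * A * h * exp (a * T))"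
      using Ds by (intro add_left_mono mult_left_mono) auto
    also have "\<dots> \<le> C * ((t - s) + F t - F s)"
    proof -
      have q: "0 \<le> 2 * \<bar>K\<bar> * A * exp (a * T)" using A0 by simp
      have "C * ((t - s) + F t - F s) = (F t - F s) + h + (2 * \<bar>K\<bar> * A * exp (a * T)) * h + (2 * \<bar>K\<bar> * A * exp (a * T)) * (F t - F s)"
        unfolding C_def h_def by (simp add: algebra_simps)
      moreover have "0 \<le> (2 * \<bar>K\<bar> * A * exp (a * T)) * (F t - F s)" using q Fst by simp
      ultimately show ?thesis using h0 by (simp add: algebra_simps)
    qed
    finally show "\<bar>M1 t - M1 s\<bar> \<le> C * ((t - s) + F t - F s)" .
  qed
qed


theorem mainTheorem11:
  fixes M :: "'a measure"
    and L :: "'a \<Rightarrow> nat"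
    and eta :: "'a \<Rightarrow> real"
    and b :: "real \<Rightarrow> 'a \<Rightarrow> real"
    and M1 :: "real \<Rightarrow> real"
  assumes "prob_space M"
    and "L \<in> measurable M (count_space UNIV)"
    and "eta \<in> borel_measurable M"
    and "\<And>\<omega>. \<omega> \<in> space M \<Longrightarrow> eta \<omega> > 0"
    and "(\<lambda>(t, \<omega>). b t \<omega>) \<in> borel_measurable (borel \<Otimes>\<^sub>M M)"
    and "\<And>t \<omega>. \<omega> \<in> space M \<Longrightarrow> b t \<omega> \<ge> 0"
    and H1_L: "integrable M (\<lambda>\<omega>. real (L \<omega>))"
    and H1_b: "\<And>T. T > 0 \<Longrightarrow> \<exists>B::real. \<forall>t\<in>{0<..<T}. (\<integral>\<^sup>+\<omega>. ennreal (b t \<omega>) \<partial>M) \<le> ennreal B"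
    and "cmj_renewal_solution (cmj_Lbar M L) (cmj_F M eta) (cmj_bbar M b) M1"
  shows "\<forall>T>0. \<exists>C::real. \<forall>s t. 0 < s \<and> s < t \<and> t \<le> T \<longrightarrow>
           \<bar>M1 t - M1 s\<bar> \<le> C * ((t - s) + cmj_F M eta t - cmj_F M eta s)"
proof (intro allI impI)
  fix T :: real assume T: "T > 0"
  interpret P: prob_space M by fact
  define K where "K = cmj_Lbar M L"
  define F where "F = cmj_F M eta"
  define bb where "bb = cmj_bbar M b"
  note [measurable] = assms(3) assms(5)
  have nnm: "(\<lambda>t. \<integral>\<^sup>+\<omega>. ennreal (b t \<omega>) \<partial>M) \<in> borel_measurable borel"
    by (rule P.borel_measurable_nn_integral[where f="\<lambda>t \<omega>. ennreal (b t \<omega>)"]) measurable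
  have bbm[measurable]: "bb \<in> borel_measurable borel" unfolding bb_def cmj_bbar_def
    using measurable_compose[OF nnm borel_measurable_enn2real] by (simp add: o_def)
  obtain B where B: "\<forall>t\<in>{0<..<T+1}. (\<integral>\<^sup>+\<omega>. ennreal (b t \<omega>) \<partial>M) \<le> ennreal B"
    using H1_b[of "T+1"] T by auto
  define Bb where "Bb = max B 0"
  have bbb: "bb u \<le> Bb" if "u \<in> {0<..T}" for u
  proof -
    have "(\<integral>\<^sup>+\<omega>. ennreal (b u \<omega>) \<partial>M) \<le> ennreal Bb"
    proof (rule order_trans)
      show "(\<integral>\<^sup>+\<omega>. ennreal (b u \<omega>) \<partial>M) \<le> ennreal B" by (rule bspec[OF B]) (use that in auto)
      show "ennreal B \<le> ennreal Bb" by (rule ennreal_leI) (simp add: Bb_def)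
    qed
    hence "bb u \<le> enn2real (ennreal Bb)" unfolding bb_def cmj_bbar_def by (rule enn2real_mono) simp
    moreover have "enn2real (ennreal Bb) = Bb" by (rule enn2real_ennreal) (simp add: Bb_def)
    ultimately show ?thesis by linarith
  qed
  have bb0: "0 \<le> bb u" for u by (simp add: bb_def cmj_bbar_def)
  define \<beta> where "\<beta> u = (if u \<in> {0<..T} then bb u else 0)" for u
  have \<beta>m: "\<beta> \<in> borel_measurable borel" unfolding \<beta>_def
    by (rule measurable_If_set[OF bbm]) auto
  have \<beta>0: "0 \<le> \<beta> u" for u using bb0 by (simp add: \<beta>_def)
  have \<beta>b: "\<beta> u \<le> Bb" for u using bbb by (auto simp: \<beta>_def Bb_def)
  have Fmono: "mono F" unfolding mono_def F_def cmj_F_def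
  proof (intro allI impI)
    fix x y :: real assume xy: "x \<le> y"
    show "measure M {\<omega> \<in> space M. eta \<omega> \<le> x} \<le> measure M {\<omega> \<in> space M. eta \<omega> \<le> y}"
    proof (rule P.finite_measure_mono)
      show "{\<omega> \<in> space M. eta \<omega> \<le> x} \<subseteq> {\<omega> \<in> space M. eta \<omega> \<le> y}" using xy by auto
      show "{\<omega> \<in> space M. eta \<omega> \<le> y} \<in> sets M" by measurable
    qed
  qed
  have F0: "0 \<le> F x" for x by (simp add: F_def cmj_F_def)
  have F1: "F x \<le> 1" for x unfolding F_def cmj_F_def by (rule P.prob_le_1)
  have ren: "M1 \<in> borel_measurable borel" "\<forall>T\<ge>0. \<exists>B. \<forall>t\<in>{0..T}. \<bar>M1 t\<bar> \<le> B"
    "\<forall>t\<ge>0. M1 t = (1 - F t) + (LINT s:{0..t}|lborel. K * M1 (t - s) * bb s)"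
    using assms(9) unfolding cmj_renewal_solution_def K_def[symmetric] F_def[symmetric] bb_def[symmetric] by blast+
  note [measurable] = ren(1)
  obtain Bm where Bm': "\<forall>t\<in>{0..T}. \<bar>M1 t\<bar> \<le> Bm"
    using ren(2)[rule_format, OF less_imp_le[OF T]] by blast
  have Bm: "\<bar>M1 t\<bar> \<le> Bm" if "t \<in> {0..T}" for t using Bm' that by blast
  have "\<bar>M1 0\<bar> \<le> Bm" using T by (intro Bm) simp
  hence Bm0: "0 \<le> Bm" by (rule order_trans[OF abs_ge_zero])
  have eq: "M1 t = 1 - F t + K * integral {0..t} (\<lambda>u. M1 (t - u) * \<beta> u)" if t: "t \<in> {0..T}" for t
  proof -
    have si: "set_integrable lborel {0..t} (\<lambda>s. K * M1 (t - s) * bb s)"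
      unfolding set_integrable_def
    proof (rule integrableI_bounded_set[where A="{0..t}" and B="\<bar>K\<bar> * Bm * Bb"])
      show "AE x in lborel. x \<in> {0..t} \<longrightarrow> norm (indicator {0..t} x *\<^sub>R (K * M1 (t - x) * bb x)) \<le> \<bar>K\<bar> * Bm * Bb"
        using AE_lborel_singleton[of 0]
      proof (rule eventually_mono)
        fix x :: real assume x0: "x \<noteq> 0"
        show "x \<in> {0..t} \<longrightarrow> norm (indicator {0..t} x *\<^sub>R (K * M1 (t - x) * bb x)) \<le> \<bar>K\<bar> * Bm * Bb"
        proof
          assume x: "x \<in> {0..t}"
          have "\<bar>M1 (t - x)\<bar> \<le> Bm" using x t by (intro Bm) auto
          moreover have "bb x \<le> Bb" using x t x0 by (intro bbb) auto
          ultimately show "norm (indicator {0..t} x *\<^sub>R (K * M1 (t - x) * bb x)) \<le> \<bar>K\<bar> * Bm * Bb"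
            using x bb0[of x] Bm0 by (simp add: abs_mult mult_mono mult_left_mono)
        qed
      qed
    qed (auto simp: emeasure_lborel_Icc_eq)
    have "(LINT s:{0..t}|lborel. K * M1 (t - s) * bb s) = integral {0..t} (\<lambda>s. K * M1 (t - s) * bb s)"
      by (rule set_borel_integral_eq_integral(2)[OF si])
    also have "\<dots> = integral {0..t} (\<lambda>s. K * (M1 (t - s) * \<beta> s))"
      by (rule integral_spike[where S="{0}"]) (use t in \<open>auto simp: \<beta>_def\<close>)
    also have "\<dots> = K * integral {0..t} (\<lambda>s. M1 (t - s) * \<beta> s)"
      by (rule Henstock_Kurzweil_Integration.integral_mult_right)
    finally show ?thesis using ren(3) t by auto
  qed
  have "\<exists>C. \<forall>s t. 0 < s \<and> s < t \<and> t \<le> T \<longrightarrow> \<bar>M1 t - M1 s\<bar> \<le> C * ((t - s) + F t - F s)"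
    by (rule core[OF ren(1) \<beta>m Fmono F0 F1 Bm \<beta>0 \<beta>b eq T])
  thus "\<exists>C::real. \<forall>s t. 0 < s \<and> s < t \<and> t \<le> T \<longrightarrow>
           \<bar>M1 t - M1 s\<bar> \<le> C * ((t - s) + cmj_F M eta t - cmj_F M eta s)"
    unfolding F_def .
qed

end
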